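(* Let $\alpha=0$, so $f=z^2$, and let $X, Y, M_\lambda$ be as defined below. Then: (1) $\underline{\operatorname{Ext}}^1_A(X,Y)\cong\underline{\operatorname{Ext}}^1_A(Y,X)\cong\Bbbk$ as graded vector spaces, concentrated in degree $0$; (2) $\underline{\operatorname{Ext}}^1_A(X,X)\cong\underline{\operatorname{Ext}}^1_A(Y,Y)\cong\Bbbk$, concentrated in degree $0$; (3) for $\lambda,\mu\in\Bbbk\setminus\mathbb{Z}$ with $\lambda\neq\mu$, $\operatorname{Ext}^1_{\operatorname{gr}A}(M_\lambda,M_\mu)=0$, while $\operatorname{Ext}^1_{\operatorname{gr}A}(M_\lambda,M_\lambda)\cong\Bbbk$; (4) for $\lambda\in\Bbbk\setminus\mathbb{Z}$ and $S\in\{X,Y\}$, $\underline{\operatorname{Ext}}^1_A(M_\lambda,S)=\underline{\operatorname{Ext}}^1_A(S,M_\lambda)=0$.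
   Context: $\Bbbk$ is an algebraically closed field of characteristic $0$. $A=A(z^2)$ is the $\Bbbk$-algebra generated by $\Bbbk[z]$, $x$, $y$ with relations $xz=(z+1)x$, $yz=(z-1)y$, $xy=z^2$, $yx=(z-1)^2$, graded by $\deg x=1,\deg y=-1,\deg z=0$. $\operatorname{gr}A$ is the category of finitely generated graded right $A$-modules with degree-$0$ maps; $M\langle i\rangle_j=M_{j-i}$. $X=A/(xA+zA)$, $Y=(A/(yA+(z-1)A))\langle1\rangle$, $M_\lambda=A/(z+\lambda)A$. For graded modules $M,N$, $\underline{\operatorname{Hom}}_A(M,N)=\bigoplus_d\underline{\operatorname{Hom}}_A(M,N)_d$ where $\underline{\operatorname{Hom}}_A(M,N)_d$ is the space of graded homomorphisms of degree $d$, and $\underline{\operatorname{Ext}}^i_A$ are its derived functors (so $\underline{\operatorname{Ext}}^1_A(M,N)_d=\operatorname{Ext}^1_{\operatorname{gr}A}(M,N\langle d\rangle)$); "$\Bbbk$ concentrated in degree $0$" means one-dimensional in degree $0$ and zero elsewhere. *)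

theory Defs
  imports Main "HOL-Library.Product_Plus" "HOL-Computational_Algebra.Polynomial"
begin

(* A graded right A-module, A = A(z^2) = k<x,y,z>/(xz=(z+1)x, yz=(z-1)y, xy=z^2, yx=(z-1)^2),
   deg x = 1, deg y = -1, deg z = 0, is given by its homogeneous components (gcomp j)
   (k-subspaces of a carrier type 'v) together with the right actions of the generators on
   homogeneous elements:  gx j : M_j -> M_(j+1)  (m |-> m.x),  gy j : M_j -> M_(j-1),
   gz j : M_j -> M_j, subject to the defining relations read as right actions. *)
record 'v gmod =
  gcomp :: "int \<Rightarrow> 'v set"
  gx :: "int \<Rightarrow> 'v \<Rightarrow> 'v"
  gy :: "int \<Rightarrow> 'v \<Rightarrow> 'v"
  gz :: "int \<Rightarrow> 'v \<Rightarrow> 'v"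

definition is_gmod :: "('k::field \<Rightarrow> 'v::ab_group_add \<Rightarrow> 'v) \<Rightarrow> 'v gmod \<Rightarrow> bool" where
  "is_gmod s M \<longleftrightarrow> vector_space s \<and> (\<forall>j. module.subspace s (gcomp M j)) \<and>
    (\<forall>j. \<forall>v\<in>gcomp M j. gx M j v \<in> gcomp M (j+1) \<and> gy M j v \<in> gcomp M (j-1) \<and> gz M j v \<in> gcomp M j) \<and>
    (\<forall>j. \<forall>u\<in>gcomp M j. \<forall>v\<in>gcomp M j. \<forall>c.
        gx M j (s c u + v) = s c (gx M j u) + gx M j v \<and>
        gy M j (s c u + v) = s c (gy M j u) + gy M j v \<and>
        gz M j (s c u + v) = s c (gz M j u) + gz M j v) \<and>
    (\<forall>j. \<forall>v\<in>gcomp M j.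
        gz M (j+1) (gx M j v) = gx M j (gz M j v + v) \<and>            \<comment> \<open>xz = (z+1)x\<close>
        gz M (j-1) (gy M j v) = gy M j (gz M j v - v) \<and>            \<comment> \<open>yz = (z-1)y\<close>
        gy M (j+1) (gx M j v) = gz M j (gz M j v) \<and>                \<comment> \<open>xy = z^2\<close>
        gx M (j-1) (gy M j v) = gz M j (gz M j v - v) - (gz M j v - v))  \<comment> \<open>yx = (z-1)^2\<close>"

definition gmod_hom :: "('k::field \<Rightarrow> 'a::ab_group_add \<Rightarrow> 'a) \<Rightarrow> ('k \<Rightarrow> 'b::ab_group_add \<Rightarrow> 'b) \<Rightarrow> 'a gmod \<Rightarrow> 'b gmod
    \<Rightarrow> (int \<Rightarrow> 'a \<Rightarrow> 'b) \<Rightarrow> bool" where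
  "gmod_hom s t M1 M2 f \<longleftrightarrow> (\<forall>j. \<forall>v\<in>gcomp M1 j. f j v \<in> gcomp M2 j \<and>
      f (j+1) (gx M1 j v) = gx M2 j (f j v) \<and>
      f (j-1) (gy M1 j v) = gy M2 j (f j v) \<and>
      f j (gz M1 j v) = gz M2 j (f j v) \<and>
      (\<forall>u\<in>gcomp M1 j. \<forall>c. f j (s c u + v) = t c (f j u) + f j v))"

definition shift :: "'v gmod \<Rightarrow> int \<Rightarrow> 'v gmod" where
  "shift M d = \<lparr>gcomp = (\<lambda>j. gcomp M (j-d)), gx = (\<lambda>j. gx M (j-d)),
                 gy = (\<lambda>j. gy M (j-d)), gz = (\<lambda>j. gz M (j-d))\<rparr>"

(* Extensions 0 -> N -> E -> M -> 0 in gr A, with E = N (+) M as graded vector space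
   (every extension is isomorphic, compatibly with N -> E -> M, to one of these).
   The extra data: the components c = (xi, eta, zeta) of the actions of x, y, z from M to N. *)
type_synonym 'k cocyc = "(int \<Rightarrow> 'k \<Rightarrow> 'k) \<times> (int \<Rightarrow> 'k \<Rightarrow> 'k) \<times> (int \<Rightarrow> 'k \<Rightarrow> 'k)"

definition pscale :: "'k::field \<Rightarrow> 'k \<times> 'k \<Rightarrow> 'k \<times> 'k" where
  "pscale c p = (c * fst p, c * snd p)"

definition ext_mod :: "'k::field gmod \<Rightarrow> 'k gmod \<Rightarrow> 'k cocyc \<Rightarrow> ('k \<times> 'k) gmod" where
  "ext_mod M N c = (case c of (xi, eta, zeta) \<Rightarrow>
     \<lparr>gcomp = (\<lambda>j. gcomp N j \<times> gcomp M j),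
      gx = (\<lambda>j p. (gx N j (fst p) + xi j (snd p), gx M j (snd p))),
      gy = (\<lambda>j p. (gy N j (fst p) + eta j (snd p), gy M j (snd p))),
      gz = (\<lambda>j p. (gz N j (fst p) + zeta j (snd p), gz M j (snd p)))\<rparr>)"

definition is_ext :: "'k::field gmod \<Rightarrow> 'k gmod \<Rightarrow> 'k cocyc \<Rightarrow> bool" where
  "is_ext M N c \<longleftrightarrow> is_gmod pscale (ext_mod M N c)"

definition ext_equiv :: "'k::field gmod \<Rightarrow> 'k gmod \<Rightarrow> 'k cocyc \<Rightarrow> 'k cocyc \<Rightarrow> bool" where
  "ext_equiv M N c c' \<longleftrightarrow> (\<exists>f. gmod_hom pscale pscale (ext_mod M N c) (ext_mod M N c') f \<and>
      (\<forall>j. \<forall>n\<in>gcomp N j. f j (n, 0) = (n, 0)) \<and>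
      (\<forall>j. \<forall>p\<in>gcomp N j \<times> gcomp M j. snd (f j p) = snd p))"

definition zero_cocyc :: "'k::field cocyc" where
  "zero_cocyc = ((\<lambda>_ _. 0), (\<lambda>_ _. 0), (\<lambda>_ _. 0))"

(* scalar action a.[E] on Ext^1 (pushout along a.id_N) *)
definition cscale :: "'k::field \<Rightarrow> 'k cocyc \<Rightarrow> 'k cocyc" where
  "cscale a c = (case c of (xi, eta, zeta) \<Rightarrow>
     ((\<lambda>j m. a * xi j m), (\<lambda>j m. a * eta j m), (\<lambda>j m. a * zeta j m)))"

definition Ext1_zero :: "'k::field gmod \<Rightarrow> 'k gmod \<Rightarrow> bool" where
  "Ext1_zero M N \<longleftrightarrow> (\<forall>c. is_ext M N c \<longrightarrow> ext_equiv M N c zero_cocyc)"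

(* Ext^1_{gr A}(M,N) is isomorphic to k: there is a class [c0] such that a |-> a.[c0] is a bijection k -> Ext^1 *)
definition Ext1_one :: "'k::field gmod \<Rightarrow> 'k gmod \<Rightarrow> bool" where
  "Ext1_one M N \<longleftrightarrow> (\<exists>c0. is_ext M N c0 \<and>
      (\<forall>c. is_ext M N c \<longrightarrow> (\<exists>!a. ext_equiv M N c (cscale a c0))))"

(* graded Ext: \<underline>Ext^1_A(M,N)_d = Ext^1_{gr A}(M, N<d>) *)
definition gExt1_zero :: "'k::field gmod \<Rightarrow> 'k gmod \<Rightarrow> bool" where
  "gExt1_zero M N \<longleftrightarrow> (\<forall>d. Ext1_zero M (shift N d))"

definition gExt1_k_deg0 :: "'k::field gmod \<Rightarrow> 'k gmod \<Rightarrow> bool" where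
  "gExt1_k_deg0 M N \<longleftrightarrow> Ext1_one M (shift N 0) \<and> (\<forall>d. d \<noteq> 0 \<longrightarrow> Ext1_zero M (shift N d))"

(* The modules, on carrier k with a basis element e_j in each supported degree j.
   X = A/(xA+zA): basis y^n (deg -n, n>=0); e_j.y = e_(j-1), e_j.x = j^2 e_(j+1) (j<0), e_0.x = 0, e_j.z = j e_j. *)
definition Xmod :: "'k::field gmod" where
  "Xmod = \<lparr>gcomp = (\<lambda>j. if j \<le> 0 then UNIV else {0}),
           gx = (\<lambda>j v. if j < 0 then of_int (j^2) * v else 0),
           gy = (\<lambda>j v. if j \<le> 0 then v else 0),
           gz = (\<lambda>j v. of_int j * v)\<rparr>"

(* Y = (A/(yA+(z-1)A))<1>: basis x^n in degree n+1 (n>=0);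
   e_j.x = e_(j+1), e_j.y = (j-1)^2 e_(j-1), e_j.z = j e_j. *)
definition Ymod :: "'k::field gmod" where
  "Ymod = \<lparr>gcomp = (\<lambda>j. if 1 \<le> j then UNIV else {0}),
           gx = (\<lambda>j v. if 1 \<le> j then v else 0),
           gy = (\<lambda>j v. if 1 \<le> j then of_int ((j-1)^2) * v else 0),
           gz = (\<lambda>j v. of_int j * v)\<rparr>"

(* M_la = A/(z+la)A: basis x^n (deg n >= 0), y^n (deg -n); e_j.z = (j-la) e_j,
   e_j.x = e_(j+1) (j>=0), = (j-la)^2 e_(j+1) (j<0); e_j.y = e_(j-1) (j<=0), = (j-1-la)^2 e_(j-1) (j>0). *)
definition Mmod :: "'k::field \<Rightarrow> 'k gmod" where
  "Mmod la = \<lparr>gcomp = (\<lambda>j. UNIV),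
           gx = (\<lambda>j v. (if 0 \<le> j then 1 else (of_int j - la)^2) * v),
           gy = (\<lambda>j v. (if j \<le> 0 then 1 else (of_int j - 1 - la)^2) * v),
           gz = (\<lambda>j v. (of_int j - la) * v)\<rparr>"

end

theory Submission
  imports Defs
begin

definition rmod :: "int set \<Rightarrow> (int \<Rightarrow> 'k::field) \<Rightarrow> (int \<Rightarrow> 'k) \<Rightarrow> 'k \<Rightarrow> 'k gmod" where
  "rmod S X Y r = \<lparr>gcomp = (\<lambda>j. if j \<in> S then UNIV else {0}), gx = (\<lambda>j v. X j * v),
      gy = (\<lambda>j v. Y j * v), gz = (\<lambda>j v. (of_int j - r) * v)\<rparr>"

lemma rmod_simps[simp]:
  "gcomp (rmod S X Y r) j = (if j \<in> S then UNIV else {0})"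
  "gx (rmod S X Y r) j v = X j * v"
  "gy (rmod S X Y r) j v = Y j * v"
  "gz (rmod S X Y r) j v = (of_int j - r) * v"
  by (simp_all add: rmod_def)

lemma ext_simps[simp]:
  "gcomp (ext_mod M N (xi,eta,zeta)) j = gcomp N j \<times> gcomp M j"
  "gx (ext_mod M N (xi,eta,zeta)) j p = (gx N j (fst p) + xi j (snd p), gx M j (snd p))"
  "gy (ext_mod M N (xi,eta,zeta)) j p = (gy N j (fst p) + eta j (snd p), gy M j (snd p))"
  "gz (ext_mod M N (xi,eta,zeta)) j p = (gz N j (fst p) + zeta j (snd p), gz M j (snd p))"
  by (simp_all add: ext_mod_def)

lemma pscale_simp[simp]: "pscale c (a,b) = (c*a, c*b)"
  by (simp add: pscale_def)

lemma vs_pscale: "vector_space (pscale :: 'k::field \<Rightarrow> _)"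
  by unfold_locales (auto simp: pscale_def algebra_simps)

lemma module_pscale: "module (pscale :: 'k::field \<Rightarrow> _)"
  by unfold_locales (auto simp: pscale_def algebra_simps)

lemma shift_rmod: "shift (rmod S X Y r) d = rmod {j. j - d \<in> S} (\<lambda>j. X (j-d)) (\<lambda>j. Y (j-d)) (r + of_int d)"
  by (simp add: shift_def rmod_def algebra_simps)

lemma shift0: "shift M 0 = M"
  by (simp add: shift_def)

definition ext_cond :: "int set \<Rightarrow> (int \<Rightarrow> 'k::field) \<Rightarrow> (int \<Rightarrow> 'k) \<Rightarrow> 'k \<Rightarrow> int set \<Rightarrow> (int \<Rightarrow> 'k) \<Rightarrow> (int \<Rightarrow> 'k) \<Rightarrow> 'k
   \<Rightarrow> (int \<Rightarrow> 'k) \<Rightarrow> (int \<Rightarrow> 'k) \<Rightarrow> (int \<Rightarrow> 'k) \<Rightarrow> bool" where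
  "ext_cond SM XM YM rM SN XN YN rN A B C \<longleftrightarrow> (\<forall>j\<in>SM.
     (j+1 \<notin> SN \<longrightarrow> A j = 0) \<and> (j-1 \<notin> SN \<longrightarrow> B j = 0) \<and> (j \<notin> SN \<longrightarrow> C j = 0) \<and>
     (of_int j + 1 - rN) * A j + XM j * C (j+1) = XN j * C j + (of_int j - rM + 1) * A j \<and>
     (of_int j - 1 - rN) * B j + YM j * C (j-1) = YN j * C j + (of_int j - rM - 1) * B j \<and>
     YN (j+1) * A j + XM j * B (j+1) = (of_int j - rN) * C j + (of_int j - rM) * C j \<and>
     XN (j-1) * B j + YM j * A (j-1) = (of_int j - rN) * C j + (of_int j - rM - 1) * C j - C j)"

lemma ext_fwd:
  fixes xi eta zeta :: "int \<Rightarrow> 'k::field \<Rightarrow> 'k"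
  assumes "is_ext (rmod SM XM YM rM) (rmod SN XN YN rN) (xi,eta,zeta)"
  shows "\<forall>j. xi j 0 = 0 \<and> eta j 0 = 0 \<and> zeta j 0 = 0"
    and "\<forall>j\<in>SM. \<forall>m. xi j m = m * xi j 1 \<and> eta j m = m * eta j 1 \<and> zeta j m = m * zeta j 1"
    and "\<forall>j\<in>SM. (j+1 \<notin> SM \<longrightarrow> XM j = 0) \<and> (j-1 \<notin> SM \<longrightarrow> YM j = 0)"
    and "ext_cond SM XM YM rM SN XN YN rN (\<lambda>j. xi j 1) (\<lambda>j. eta j 1) (\<lambda>j. zeta j 1)"
proof -
  let ?M = "rmod SM XM YM rM" and ?N = "rmod SN XN YN rN"
  let ?E = "ext_mod ?M ?N (xi,eta,zeta)"
  have G: "is_gmod pscale ?E" using assms by (simp add: is_ext_def)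
  have clos: "\<And>j v. v \<in> gcomp ?E j \<Longrightarrow> gx ?E j v \<in> gcomp ?E (j+1) \<and> gy ?E j v \<in> gcomp ?E (j-1) \<and> gz ?E j v \<in> gcomp ?E j"
    using G unfolding is_gmod_def by blast
  have lin: "\<And>j u v c. u \<in> gcomp ?E j \<Longrightarrow> v \<in> gcomp ?E j \<Longrightarrow>
        gx ?E j (pscale c u + v) = pscale c (gx ?E j u) + gx ?E j v \<and>
        gy ?E j (pscale c u + v) = pscale c (gy ?E j u) + gy ?E j v \<and>
        gz ?E j (pscale c u + v) = pscale c (gz ?E j u) + gz ?E j v"
    using G unfolding is_gmod_def by blast
  have rel: "\<And>j v. v \<in> gcomp ?E j \<Longrightarrow>
        gz ?E (j+1) (gx ?E j v) = gx ?E j (gz ?E j v + v) \<and>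
        gz ?E (j-1) (gy ?E j v) = gy ?E j (gz ?E j v - v) \<and>
        gy ?E (j+1) (gx ?E j v) = gz ?E j (gz ?E j v) \<and>
        gx ?E (j-1) (gy ?E j v) = gz ?E j (gz ?E j v - v) - (gz ?E j v - v)"
    using G unfolding is_gmod_def by blast
  have z0: "(0::'k,0::'k) \<in> gcomp ?E j" for j by simp
  have Z: "xi j 0 = 0 \<and> eta j 0 = 0 \<and> zeta j 0 = 0" for j
    using lin[OF z0 z0, of j "-1"] by simp
  then show "\<forall>j. xi j 0 = 0 \<and> eta j 0 = 0 \<and> zeta j 0 = 0" by blast
  have L: "xi j m = m * xi j 1 \<and> eta j m = m * eta j 1 \<and> zeta j m = m * zeta j 1" if "j \<in> SM" for j m
  proof -
    have u: "(0::'k,1::'k) \<in> gcomp ?E j" using that by simp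
    show ?thesis using lin[OF u z0, of m] Z[of j] by simp
  qed
  then show "\<forall>j\<in>SM. \<forall>m. xi j m = m * xi j 1 \<and> eta j m = m * eta j 1 \<and> zeta j m = m * zeta j 1" by blast
  have C: "(j+1 \<notin> SM \<longrightarrow> XM j = 0) \<and> (j-1 \<notin> SM \<longrightarrow> YM j = 0) \<and>
     (j+1 \<notin> SN \<longrightarrow> xi j 1 = 0) \<and> (j-1 \<notin> SN \<longrightarrow> eta j 1 = 0) \<and> (j \<notin> SN \<longrightarrow> zeta j 1 = 0)" if "j \<in> SM" for j
  proof -
    have u: "(0::'k,1::'k) \<in> gcomp ?E j" using that by simp
    show ?thesis using clos[OF u] by (auto split: if_splits)
  qed
  then show "\<forall>j\<in>SM. (j+1 \<notin> SM \<longrightarrow> XM j = 0) \<and> (j-1 \<notin> SM \<longrightarrow> YM j = 0)" by blast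
  have zz: "zeta i (XM j * m) = XM j * m * zeta i 1" if "j \<in> SM" "i = j + 1" for i j m
    using C[OF that(1)] L[of i "XM j * m"] Z[of i] that by (cases "i \<in> SM") auto
  have zy: "zeta i (YM j * m) = YM j * m * zeta i 1" if "j \<in> SM" "i = j - 1" for i j m
    using C[OF that(1)] L[of i "YM j * m"] Z[of i] that by (cases "i \<in> SM") auto
  have ey: "eta i (XM j * m) = XM j * m * eta i 1" if "j \<in> SM" "i = j + 1" for i j m
    using C[OF that(1)] L[of i "XM j * m"] Z[of i] that by (cases "i \<in> SM") auto
  have xy: "xi i (YM j * m) = YM j * m * xi i 1" if "j \<in> SM" "i = j - 1" for i j m
    using C[OF that(1)] L[of i "YM j * m"] Z[of i] that by (cases "i \<in> SM") auto
  have R: "(of_int j + 1 - rN) * xi j 1 + XM j * zeta (j+1) 1 = XN j * zeta j 1 + (of_int j - rM + 1) * xi j 1 \<and>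
     (of_int j - 1 - rN) * eta j 1 + YM j * zeta (j-1) 1 = YN j * zeta j 1 + (of_int j - rM - 1) * eta j 1 \<and>
     YN (j+1) * xi j 1 + XM j * eta (j+1) 1 = (of_int j - rN) * zeta j 1 + (of_int j - rM) * zeta j 1 \<and>
     XN (j-1) * eta j 1 + YM j * xi (j-1) 1 = (of_int j - rN) * zeta j 1 + (of_int j - rM - 1) * zeta j 1 - zeta j 1"
    if "j \<in> SM" for j
  proof -
    have u: "(0::'k,1::'k) \<in> gcomp ?E j" using that by simp
    have r: "gz ?E (j+1) (gx ?E j (0,1)) = gx ?E j (gz ?E j (0,1) + (0,1)) \<and>
        gz ?E (j-1) (gy ?E j (0,1)) = gy ?E j (gz ?E j (0,1) - (0,1)) \<and>
        gy ?E (j+1) (gx ?E j (0,1)) = gz ?E j (gz ?E j (0,1)) \<and>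
        gx ?E (j-1) (gy ?E j (0,1)) = gz ?E j (gz ?E j (0,1) - (0,1)) - (gz ?E j (0,1) - (0,1))"
      using rel[OF u] .
    have e1: "xi j (of_int j - rM + 1) = (of_int j - rM + 1) * xi j 1" using L[OF that] by blast
    have e2: "eta j (of_int j - rM - 1) = (of_int j - rM - 1) * eta j 1" using L[OF that] by blast
    have e3: "zeta j (of_int j - rM) = (of_int j - rM) * zeta j 1" using L[OF that] by blast
    have e4: "zeta j (of_int j - rM - 1) = (of_int j - rM - 1) * zeta j 1" using L[OF that] by blast
    show ?thesis using r e1 e2 e3 e4 zz[OF that refl, of 1] zy[OF that refl, of 1] ey[OF that refl, of 1]
        xy[OF that refl, of 1] Z[of j]
      by simp
  qed
  show "ext_cond SM XM YM rM SN XN YN rN (\<lambda>j. xi j 1) (\<lambda>j. eta j 1) (\<lambda>j. zeta j 1)"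
    unfolding ext_cond_def using R C by blast
qed

definition rmod_ok :: "int set \<Rightarrow> (int \<Rightarrow> 'k::field) \<Rightarrow> (int \<Rightarrow> 'k) \<Rightarrow> 'k \<Rightarrow> bool" where
  "rmod_ok S X Y r \<longleftrightarrow> (\<forall>j\<in>S. (j+1 \<notin> S \<longrightarrow> X j = 0) \<and> (j-1 \<notin> S \<longrightarrow> Y j = 0) \<and>
      Y (j+1) * X j = (of_int j - r)^2 \<and> X (j-1) * Y j = (of_int j - r - 1)^2)"

definition mkc :: "(int \<Rightarrow> 'k::field) \<Rightarrow> (int \<Rightarrow> 'k) \<Rightarrow> (int \<Rightarrow> 'k) \<Rightarrow> 'k cocyc" where
  "mkc A B C = ((\<lambda>j m. A j * m), (\<lambda>j m. B j * m), (\<lambda>j m. C j * m))"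

lemma rel_facts:
  assumes "rmod_ok S X Y r" "n \<in> gcomp (rmod S X Y r) j"
  shows "n * (Y (j+1) * X j - (of_int j - r)^2) = 0" "n * (X (j-1) * Y j - (of_int j - r - 1)^2) = 0"
    "j+1 \<notin> S \<Longrightarrow> X j * n = 0" "j-1 \<notin> S \<Longrightarrow> Y j * n = 0" 
proof -
  have "j \<in> S \<Longrightarrow> (j+1 \<notin> S \<longrightarrow> X j = 0) \<and> (j-1 \<notin> S \<longrightarrow> Y j = 0) \<and>
      Y (j+1) * X j = (of_int j - r)^2 \<and> X (j-1) * Y j = (of_int j - r - 1)^2"
    using assms(1) unfolding rmod_ok_def by blast
  moreover have "j \<notin> S \<Longrightarrow> n = 0" using assms(2) by auto
  ultimately show "n * (Y (j+1) * X j - (of_int j - r)^2) = 0" "n * (X (j-1) * Y j - (of_int j - r - 1)^2) = 0"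
    "j+1 \<notin> S \<Longrightarrow> X j * n = 0" "j-1 \<notin> S \<Longrightarrow> Y j * n = 0" by (cases "j \<in> S"; simp)+
qed

lemma ext_bwd:
  fixes A B C :: "int \<Rightarrow> 'k::field"
  assumes okM: "rmod_ok SM XM YM rM" and okN: "rmod_ok SN XN YN rN"
    and ec: "ext_cond SM XM YM rM SN XN YN rN A B C"
  shows "is_ext (rmod SM XM YM rM) (rmod SN XN YN rN) (mkc A B C)"
proof -
  let ?M = "rmod SM XM YM rM" and ?N = "rmod SN XN YN rN"
  have mf: "m * ((of_int j + 1 - rN) * A j + XM j * C (j+1) - (XN j * C j + (of_int j - rM + 1) * A j)) = 0 \<and>
     m * ((of_int j - 1 - rN) * B j + YM j * C (j-1) - (YN j * C j + (of_int j - rM - 1) * B j)) = 0 \<and>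
     m * (YN (j+1) * A j + XM j * B (j+1) - ((of_int j - rN) * C j + (of_int j - rM) * C j)) = 0 \<and>
     m * (XN (j-1) * B j + YM j * A (j-1) - ((of_int j - rN) * C j + (of_int j - rM - 1) * C j - C j)) = 0"
    if "m \<in> gcomp ?M j" for j m
  proof (cases "j \<in> SM")
    case True
    then show ?thesis using ec unfolding ext_cond_def by simp
  next
    case False
    then show ?thesis using that by simp
  qed
  have mS: "(j+1 \<notin> SN \<longrightarrow> A j * m = 0) \<and> (j-1 \<notin> SN \<longrightarrow> B j * m = 0) \<and> (j \<notin> SN \<longrightarrow> C j * m = 0)"
    if "m \<in> gcomp ?M j" for j m
  proof (cases "j \<in> SM")
    case True
    then show ?thesis using ec unfolding ext_cond_def by simp
  next
    case False
    then show ?thesis using that by simp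
  qed
  let ?E = "ext_mod ?M ?N (mkc A B C)"
  have sub: "module.subspace pscale (gcomp ?E j)" for j
    unfolding module.subspace_def[OF module_pscale] mkc_def
    by (auto simp: pscale_def zero_prod_def)
  have cl: "gx ?E j v \<in> gcomp ?E (j+1) \<and> gy ?E j v \<in> gcomp ?E (j-1) \<and> gz ?E j v \<in> gcomp ?E j"
    if "v \<in> gcomp ?E j" for j v
  proof -
    from that obtain n m where v: "v = (n,m)" and n: "n \<in> gcomp ?N j" and m: "m \<in> gcomp ?M j"
      by (auto simp: mkc_def)
    have a1: "XN j * n + A j * m \<in> gcomp ?N (j+1)" using rel_facts(3)[OF okN n] mS[OF m] by (cases "j+1 \<in> SN") auto
    have a2: "YN j * n + B j * m \<in> gcomp ?N (j-1)" using rel_facts(4)[OF okN n] mS[OF m] by (cases "j-1 \<in> SN") auto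
    have a3: "(of_int j - rN) * n + C j * m \<in> gcomp ?N j" using n mS[OF m] by (cases "j \<in> SN") auto
    have b1: "XM j * m \<in> gcomp ?M (j+1)" using rel_facts(3)[OF okM m] by (cases "j+1 \<in> SM") auto
    have b2: "YM j * m \<in> gcomp ?M (j-1)" using rel_facts(4)[OF okM m] by (cases "j-1 \<in> SM") auto
    have b3: "(of_int j - rM) * m \<in> gcomp ?M j" using m by (cases "j \<in> SM") auto
    show ?thesis using a1 a2 a3 b1 b2 b3 unfolding v mkc_def by simp
  qed
  have li: "gx ?E j (pscale c u + v) = pscale c (gx ?E j u) + gx ?E j v \<and>
        gy ?E j (pscale c u + v) = pscale c (gy ?E j u) + gy ?E j v \<and>
        gz ?E j (pscale c u + v) = pscale c (gz ?E j u) + gz ?E j v" for j u v c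
    by (cases u; cases v) (simp add: mkc_def algebra_simps)
  have re: "gz ?E (j+1) (gx ?E j v) = gx ?E j (gz ?E j v + v) \<and>
        gz ?E (j-1) (gy ?E j v) = gy ?E j (gz ?E j v - v) \<and>
        gy ?E (j+1) (gx ?E j v) = gz ?E j (gz ?E j v) \<and>
        gx ?E (j-1) (gy ?E j v) = gz ?E j (gz ?E j v - v) - (gz ?E j v - v)"
    if "v \<in> gcomp ?E j" for j v
  proof -
    from that obtain n m where v: "v = (n,m)" and n: "n \<in> gcomp ?N j" and m: "m \<in> gcomp ?M j"
      by (auto simp: mkc_def)
    note F = rel_facts(1,2)[OF okN n] rel_facts(1,2)[OF okM m] mf[OF m]
    show ?thesis unfolding v mkc_def
      apply (simp only: ext_simps rmod_simps fst_conv snd_conv add_Pair diff_Pair prod.inject of_int_add of_int_diff of_int_1)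
      apply (insert F)
      apply (intro conjI)
      by algebra+
  qed
  show ?thesis unfolding is_ext_def is_gmod_def using vs_pscale sub cl li re by blast
qed

lemma ext_clos:
  assumes "is_ext M N c" "v \<in> gcomp (ext_mod M N c) j"
  shows "gx (ext_mod M N c) j v \<in> gcomp (ext_mod M N c) (j+1) \<and> gy (ext_mod M N c) j v \<in> gcomp (ext_mod M N c) (j-1)
     \<and> gz (ext_mod M N c) j v \<in> gcomp (ext_mod M N c) j"
  using assms unfolding is_ext_def is_gmod_def by blast

lemma equiv_bwd:
  fixes xi eta zeta :: "int \<Rightarrow> 'k::field \<Rightarrow> 'k"
  assumes E: "is_ext (rmod SM XM YM rM) (rmod SN XN YN rN) (xi,eta,zeta)"
    and g0: "\<forall>j. j \<notin> SN \<longrightarrow> g j = 0"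
    and G: "\<forall>j\<in>SM. xi j 1 + g (j+1) * XM j = XN j * g j + A' j \<and>
               eta j 1 + g (j-1) * YM j = YN j * g j + B' j \<and>
               zeta j 1 + g j * (of_int j - rM) = (of_int j - rN) * g j + C' j"
  shows "ext_equiv (rmod SM XM YM rM) (rmod SN XN YN rN) (xi,eta,zeta) (mkc A' B' C')"
proof -
  let ?M = "rmod SM XM YM rM" and ?N = "rmod SN XN YN rN"
  note Z = ext_fwd(1)[OF E] and L = ext_fwd(2)[OF E]
  define f where "f = (\<lambda>j (p::'k\<times>'k). (fst p + g j * snd p, snd p))"
  have key: "xi j m + g (j+1) * (XM j * m) = XN j * (g j * m) + A' j * m \<and>
      eta j m + g (j-1) * (YM j * m) = YN j * (g j * m) + B' j * m \<and>
      zeta j m + g j * ((of_int j - rM) * m) = (of_int j - rN) * (g j * m) + C' j * m"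
    if "m \<in> gcomp ?M j" for j m
  proof (cases "j \<in> SM")
    case True
    have l: "xi j m = m * xi j 1" "eta j m = m * eta j 1" "zeta j m = m * zeta j 1" using L True by blast+
    have g: "xi j 1 + g (j+1) * XM j = XN j * g j + A' j" "eta j 1 + g (j-1) * YM j = YN j * g j + B' j"
      "zeta j 1 + g j * (of_int j - rM) = (of_int j - rN) * g j + C' j" using G True by blast+
    show ?thesis unfolding l
      using arg_cong[OF g(1), of "\<lambda>t. m * t"] arg_cong[OF g(2), of "\<lambda>t. m * t"] arg_cong[OF g(3), of "\<lambda>t. m * t"]
      by (simp add: algebra_simps)
  next
    case False
    then have "m = 0" using that by simp
    then show ?thesis using Z by simp
  qed
  have "gmod_hom pscale pscale (ext_mod ?M ?N (xi,eta,zeta)) (ext_mod ?M ?N (mkc A' B' C')) f"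
    unfolding gmod_hom_def
  proof (intro allI ballI conjI)
    fix j v assume v: "v \<in> gcomp (ext_mod ?M ?N (xi,eta,zeta)) j"
    then obtain n m where vv: "v = (n,m)" and n: "n \<in> gcomp ?N j" and m: "m \<in> gcomp ?M j" by auto
    note k = key[OF m]
    show "f j v \<in> gcomp (ext_mod ?M ?N (mkc A' B' C')) j"
      using n m g0 unfolding vv f_def mkc_def by (cases "j \<in> SN") auto
    show "f (j+1) (gx (ext_mod ?M ?N (xi,eta,zeta)) j v) = gx (ext_mod ?M ?N (mkc A' B' C')) j (f j v)"
      unfolding vv f_def mkc_def using k by (simp add: algebra_simps)
    show "f (j-1) (gy (ext_mod ?M ?N (xi,eta,zeta)) j v) = gy (ext_mod ?M ?N (mkc A' B' C')) j (f j v)"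
      unfolding vv f_def mkc_def using k by (simp add: algebra_simps)
    show "f j (gz (ext_mod ?M ?N (xi,eta,zeta)) j v) = gz (ext_mod ?M ?N (mkc A' B' C')) j (f j v)"
      unfolding vv f_def mkc_def using k by (simp add: algebra_simps)
    fix u c
    show "f j (pscale c u + v) = pscale c (f j u) + f j v"
      unfolding f_def pscale_def by (simp add: algebra_simps)
  qed
  moreover have "\<forall>j. \<forall>n\<in>gcomp ?N j. f j (n, 0) = (n, 0)" unfolding f_def by simp
  moreover have "\<forall>j. \<forall>p\<in>gcomp ?N j \<times> gcomp ?M j. snd (f j p) = snd p" unfolding f_def by simp
  ultimately show ?thesis unfolding ext_equiv_def by blast
qed

lemma equiv_fwd:
  fixes xi eta zeta xi' eta' zeta' :: "int \<Rightarrow> 'k::field \<Rightarrow> 'k"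
  assumes E: "is_ext (rmod SM XM YM rM) (rmod SN XN YN rN) (xi,eta,zeta)"
    and E': "is_ext (rmod SM XM YM rM) (rmod SN XN YN rN) (xi',eta',zeta')"
    and eq: "ext_equiv (rmod SM XM YM rM) (rmod SN XN YN rN) (xi,eta,zeta) (xi',eta',zeta')"
  shows "\<exists>g. (\<forall>j. j \<notin> SN \<longrightarrow> g j = 0) \<and> (\<forall>j\<in>SM. xi j 1 + g (j+1) * XM j = XN j * g j + xi' j 1 \<and>
               eta j 1 + g (j-1) * YM j = YN j * g j + eta' j 1 \<and>
               zeta j 1 + g j * (of_int j - rM) = (of_int j - rN) * g j + zeta' j 1)"
proof -
  let ?M = "rmod SM XM YM rM" and ?N = "rmod SN XN YN rN"
  let ?E = "ext_mod ?M ?N (xi,eta,zeta)" and ?E' = "ext_mod ?M ?N (xi',eta',zeta')"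
  obtain f where hom: "gmod_hom pscale pscale ?E ?E' f" and fid: "\<forall>j. \<forall>n\<in>gcomp ?N j. f j (n, 0) = (n, 0)"
    and fsnd: "\<forall>j. \<forall>p\<in>gcomp ?N j \<times> gcomp ?M j. snd (f j p) = snd p"
    using eq unfolding ext_equiv_def by blast
  have H: "f j v \<in> gcomp ?E' j \<and> f (j+1) (gx ?E j v) = gx ?E' j (f j v) \<and>
      f (j-1) (gy ?E j v) = gy ?E' j (f j v) \<and> f j (gz ?E j v) = gz ?E' j (f j v) \<and>
      (\<forall>u\<in>gcomp ?E j. \<forall>c. f j (pscale c u + v) = pscale c (f j u) + f j v)" if "v \<in> gcomp ?E j" for j v
    using hom that unfolding gmod_hom_def by blast
  define g where "g j = (if j \<in> SM then fst (f j (0,1)) else 0)" for j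
  have form: "f j p = (fst p + g j * snd p, snd p)" if pin: "p \<in> gcomp ?E j" for j p
  proof (cases "j \<in> SM")
    case True
    obtain a b where p: "p = (a,b)" and a: "a \<in> gcomp ?N j" using pin by (cases p) auto
    have u: "(0::'k,1::'k) \<in> gcomp ?E j" using True by simp
    have w: "(a, 0::'k) \<in> gcomp ?E j" using a by simp
    have "f j (pscale b (0,1) + (a,0)) = pscale b (f j (0,1)) + f j (a,0)"
      using H[OF w] u by blast
    moreover have "snd (f j (0,1)) = 1" using fsnd u by auto
    moreover have "f j (a,0) = (a,0)" using fid a by blast
    ultimately show ?thesis unfolding p g_def using True
      by (cases "f j (0,1)") (simp add: algebra_simps)
  next
    case False
    then obtain a where p: "p = (a,0)" and a: "a \<in> gcomp ?N j" using pin by (cases p) auto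
    show ?thesis using fid a unfolding p by simp
  qed
  have g0: "\<forall>j. j \<notin> SN \<longrightarrow> g j = 0"
  proof (intro allI impI)
    fix j assume j: "j \<notin> SN"
    show "g j = 0"
    proof (cases "j \<in> SM")
      case True
      have u: "(0::'k,1::'k) \<in> gcomp ?E j" using True by simp
      have "f j (0,1) \<in> gcomp ?E' j" using H[OF u] by blast
      then show ?thesis using j True unfolding g_def by (cases "f j (0,1)") auto
    qed (simp add: g_def)
  qed
  have G: "xi j 1 + g (j+1) * XM j = XN j * g j + xi' j 1 \<and>
               eta j 1 + g (j-1) * YM j = YN j * g j + eta' j 1 \<and>
               zeta j 1 + g j * (of_int j - rM) = (of_int j - rN) * g j + zeta' j 1" if j: "j \<in> SM" for j
  proof -
    have u: "(0::'k,1::'k) \<in> gcomp ?E j" using j by simp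
    note h = H[OF u] and c = ext_clos[OF E u]
    have f01: "f j (0,1) = (g j, 1)" using form[OF u] by simp
    have e1: "f (j+1) (gx ?E j (0,1)) = (xi j 1 + g (j+1) * XM j, XM j)"
      using form[of "gx ?E j (0,1)" "j+1"] c by simp
    have e2: "f (j-1) (gy ?E j (0,1)) = (eta j 1 + g (j-1) * YM j, YM j)"
      using form[of "gy ?E j (0,1)" "j-1"] c by simp
    have e3: "f j (gz ?E j (0,1)) = (zeta j 1 + g j * (of_int j - rM), of_int j - rM)"
      using form[of "gz ?E j (0,1)" "j"] c by simp
    show ?thesis using h e1 e2 e3 f01 by (simp add: algebra_simps)
  qed
  show ?thesis using g0 G by blast
qed

lemma zero_mkc: "zero_cocyc = mkc (\<lambda>_. 0) (\<lambda>_. 0) (\<lambda>_. 0)"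
  by (simp add: zero_cocyc_def mkc_def)

lemma delta_zero:
  fixes XM YM XN YN :: "int \<Rightarrow> 'k::field"
  assumes d: "rM \<noteq> rN"
  shows "Ext1_zero (rmod SM XM YM rM) (rmod SN XN YN rN)"
  unfolding Ext1_zero_def
proof (intro allI impI)
  fix c :: "'k cocyc"
  assume E0: "is_ext (rmod SM XM YM rM) (rmod SN XN YN rN) c"
  obtain xi eta zeta where c: "c = (xi,eta,zeta)" by (cases c)
  note E = E0[unfolded c]
  note clos = ext_fwd(3)[OF E] and ec = ext_fwd(4)[OF E]
  define D where "D = rM - rN"
  have D: "D \<noteq> 0" using d unfolding D_def by simp
  define C' where "C' j = (if j \<in> SN then zeta j 1 else 0)" for j
  define g where "g j = C' j / D" for j
  have g0: "\<forall>j. j \<notin> SN \<longrightarrow> g j = 0" unfolding g_def C'_def by simp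
  have G: "xi j 1 + g (j+1) * XM j = XN j * g j + 0 \<and>
           eta j 1 + g (j-1) * YM j = YN j * g j + 0 \<and>
           zeta j 1 + g j * (of_int j - rM) = (of_int j - rN) * g j + 0" if j: "j \<in> SM" for j
  proof -
    have ecj: "(j+1 \<notin> SN \<longrightarrow> xi j 1 = 0) \<and> (j-1 \<notin> SN \<longrightarrow> eta j 1 = 0) \<and> (j \<notin> SN \<longrightarrow> zeta j 1 = 0) \<and>
     (of_int j + 1 - rN) * xi j 1 + XM j * zeta (j+1) 1 = XN j * zeta j 1 + (of_int j - rM + 1) * xi j 1 \<and>
     (of_int j - 1 - rN) * eta j 1 + YM j * zeta (j-1) 1 = YN j * zeta j 1 + (of_int j - rM - 1) * eta j 1"
      using ec j unfolding ext_cond_def by blast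
    have cj: "zeta j 1 = C' j" using ecj unfolding C'_def by auto
    have c1: "XM j * zeta (j+1) 1 = XM j * C' (j+1)"
    proof (cases "j+1 \<in> SM")
      case True
      then have "(j+1) \<notin> SN \<longrightarrow> zeta (j+1) 1 = 0" using ec unfolding ext_cond_def by auto
      then show ?thesis unfolding C'_def by auto
    next
      case False
      then show ?thesis using clos j by auto
    qed
    have c2: "YM j * zeta (j-1) 1 = YM j * C' (j-1)"
    proof (cases "j-1 \<in> SM")
      case True
      then have "(j-1) \<notin> SN \<longrightarrow> zeta (j-1) 1 = 0" using ec unfolding ext_cond_def by auto
      then show ?thesis unfolding C'_def by auto
    next
      case False
      then show ?thesis using clos j by auto
    qed
    have R1: "(of_int j + 1 - rN) * xi j 1 + XM j * zeta (j+1) 1 = XN j * zeta j 1 + (of_int j - rM + 1) * xi j 1"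
      using ecj by blast
    have R1': "(of_int j + 1 - rN) * xi j 1 + XM j * C' (j+1) = XN j * C' j + (of_int j - rM + 1) * xi j 1"
      using R1 unfolding c1 cj .
    have R2: "(of_int j - 1 - rN) * eta j 1 + YM j * zeta (j-1) 1 = YN j * zeta j 1 + (of_int j - rM - 1) * eta j 1"
      using ecj by blast
    have R2': "(of_int j - 1 - rN) * eta j 1 + YM j * C' (j-1) = YN j * C' j + (of_int j - rM - 1) * eta j 1"
      using R2 unfolding c2 cj .
    have r1: "D * xi j 1 = XN j * C' j - XM j * C' (j+1)"
      using R1' unfolding D_def by (simp add: algebra_simps)
    have r2: "D * eta j 1 = YN j * C' j - YM j * C' (j-1)"
      using R2' unfolding D_def by (simp add: algebra_simps)
    have a: "xi j 1 + g (j+1) * XM j = XN j * g j"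
      using r1 D unfolding g_def by (simp add: field_simps)
    have b: "eta j 1 + g (j-1) * YM j = YN j * g j"
      using r2 D unfolding g_def by (simp add: field_simps)
    have z: "zeta j 1 + g j * (of_int j - rM) = (of_int j - rN) * g j"
      using cj D unfolding g_def D_def by (simp add: field_simps)
    show ?thesis using a b z by simp
  qed
  show "ext_equiv (rmod SM XM YM rM) (rmod SN XN YN rN) c zero_cocyc"
    unfolding c zero_mkc by (rule equiv_bwd[OF E g0]) (use G in blast)
qed

lemma ext_cond_scale:
  assumes "ext_cond SM XM YM rM SN XN YN rN A B C"
  shows "ext_cond SM XM YM rM SN XN YN rN (\<lambda>j. a * A j) (\<lambda>j. a * B j) (\<lambda>j. a * C j)"
  unfolding ext_cond_def
proof
  fix j assume j: "j \<in> SM"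
  have h: "(j+1 \<notin> SN \<longrightarrow> A j = 0) \<and> (j-1 \<notin> SN \<longrightarrow> B j = 0) \<and> (j \<notin> SN \<longrightarrow> C j = 0)"
    using assms j unfolding ext_cond_def by blast
  have r1: "(of_int j + 1 - rN) * A j + XM j * C (j+1) = XN j * C j + (of_int j - rM + 1) * A j"
   and r2: "(of_int j - 1 - rN) * B j + YM j * C (j-1) = YN j * C j + (of_int j - rM - 1) * B j"
   and r3: "YN (j+1) * A j + XM j * B (j+1) = (of_int j - rN) * C j + (of_int j - rM) * C j"
   and r4: "XN (j-1) * B j + YM j * A (j-1) = (of_int j - rN) * C j + (of_int j - rM - 1) * C j - C j"
    using assms j unfolding ext_cond_def by blast+
  note s = arg_cong[OF r1, of "\<lambda>t. a * t"] arg_cong[OF r2, of "\<lambda>t. a * t"]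
    arg_cong[OF r3, of "\<lambda>t. a * t"] arg_cong[OF r4, of "\<lambda>t. a * t"]
  show "(j+1 \<notin> SN \<longrightarrow> a * A j = 0) \<and> (j-1 \<notin> SN \<longrightarrow> a * B j = 0) \<and> (j \<notin> SN \<longrightarrow> a * C j = 0) \<and>
     (of_int j + 1 - rN) * (a * A j) + XM j * (a * C (j+1)) = XN j * (a * C j) + (of_int j - rM + 1) * (a * A j) \<and>
     (of_int j - 1 - rN) * (a * B j) + YM j * (a * C (j-1)) = YN j * (a * C j) + (of_int j - rM - 1) * (a * B j) \<and>
     YN (j+1) * (a * A j) + XM j * (a * B (j+1)) = (of_int j - rN) * (a * C j) + (of_int j - rM) * (a * C j) \<and>
     XN (j-1) * (a * B j) + YM j * (a * A (j-1)) = (of_int j - rN) * (a * C j) + (of_int j - rM - 1) * (a * C j) - a * C j"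
    using h s by (simp add: algebra_simps)
qed

lemma mkc_triple: "mkc A B C = ((\<lambda>j m. A j * m), (\<lambda>j m. B j * m), (\<lambda>j m. C j * m))"
  by (simp add: mkc_def)

lemma one_crit:
  fixes XM YM XN YN AA BB CC :: "int \<Rightarrow> 'k::field"
  assumes okM: "rmod_ok SM XM YM rM" and okN: "rmod_ok SN XN YN rN"
    and ec0: "ext_cond SM XM YM rM SN XN YN rN AA BB CC"
    and ex: "\<And>xi eta zeta. is_ext (rmod SM XM YM rM) (rmod SN XN YN rN) (xi,eta,zeta) \<Longrightarrow>
       \<exists>a g. (\<forall>j. j \<notin> SN \<longrightarrow> g j = 0) \<and> (\<forall>j\<in>SM. xi j 1 + g (j+1) * XM j = XN j * g j + a * AA j \<and>
               eta j 1 + g (j-1) * YM j = YN j * g j + a * BB j \<and>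
               zeta j 1 + g j * (of_int j - rM) = (of_int j - rN) * g j + a * CC j)"
    and un: "\<And>b g. (\<forall>j. j \<notin> SN \<longrightarrow> g j = 0) \<Longrightarrow> (\<forall>j\<in>SM. g (j+1) * XM j = XN j * g j + b * AA j \<and>
               g (j-1) * YM j = YN j * g j + b * BB j \<and>
               g j * (of_int j - rM) = (of_int j - rN) * g j + b * CC j) \<Longrightarrow> b = 0"
  shows "Ext1_one (rmod SM XM YM rM) (rmod SN XN YN rN)"
proof -
  let ?M = "rmod SM XM YM rM" and ?N = "rmod SN XN YN rN"
  have cs: "cscale a (mkc AA BB CC) = mkc (\<lambda>j. a * AA j) (\<lambda>j. a * BB j) (\<lambda>j. a * CC j)" for a
    by (simp add: cscale_def mkc_def fun_eq_iff)
  have isx: "is_ext ?M ?N (mkc (\<lambda>j. a * AA j) (\<lambda>j. a * BB j) (\<lambda>j. a * CC j))" for a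
    by (rule ext_bwd[OF okM okN ext_cond_scale[OF ec0]])
  show ?thesis unfolding Ext1_one_def
  proof (intro exI conjI allI impI)
    show "is_ext ?M ?N (mkc AA BB CC)" by (rule ext_bwd[OF okM okN ec0])
    fix c assume E0: "is_ext ?M ?N c"
    obtain xi eta zeta where c: "c = (xi,eta,zeta)" by (cases c)
    note E = E0[unfolded c]
    obtain a g where g0: "\<forall>j. j \<notin> SN \<longrightarrow> g j = 0" and G: "\<forall>j\<in>SM. xi j 1 + g (j+1) * XM j = XN j * g j + a * AA j \<and>
               eta j 1 + g (j-1) * YM j = YN j * g j + a * BB j \<and>
               zeta j 1 + g j * (of_int j - rM) = (of_int j - rN) * g j + a * CC j"
      using ex[OF E] by blast
    have P: "ext_equiv ?M ?N c (cscale a (mkc AA BB CC))"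
      unfolding c cs by (rule equiv_bwd[OF E g0 G])
    have U: "y = a" if Py: "ext_equiv ?M ?N c (cscale y (mkc AA BB CC))" for y
    proof -
      obtain g1 where g10: "\<forall>j. j \<notin> SN \<longrightarrow> g1 j = 0" and G1: "\<forall>j\<in>SM. xi j 1 + g1 (j+1) * XM j = XN j * g1 j + y * AA j * 1 \<and>
               eta j 1 + g1 (j-1) * YM j = YN j * g1 j + y * BB j * 1 \<and>
               zeta j 1 + g1 j * (of_int j - rM) = (of_int j - rN) * g1 j + y * CC j * 1"
        using equiv_fwd[OF E isx[of y, unfolded mkc_triple] Py[unfolded c, unfolded cs, unfolded mkc_triple]] by blast
      have "y - a = 0"
      proof (rule un[of "\<lambda>j. g1 j - g j"])
        show "\<forall>j. j \<notin> SN \<longrightarrow> g1 j - g j = 0" using g0 g10 by simp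
        show "\<forall>j\<in>SM. (g1 (j+1) - g (j+1)) * XM j = XN j * (g1 j - g j) + (y - a) * AA j \<and>
               (g1 (j-1) - g (j-1)) * YM j = YN j * (g1 j - g j) + (y - a) * BB j \<and>
               (g1 j - g j) * (of_int j - rM) = (of_int j - rN) * (g1 j - g j) + (y - a) * CC j"
        proof
          fix j assume j: "j \<in> SM"
          have h1: "xi j 1 + g1 (j+1) * XM j = XN j * g1 j + y * AA j"
             "eta j 1 + g1 (j-1) * YM j = YN j * g1 j + y * BB j"
             "zeta j 1 + g1 j * (of_int j - rM) = (of_int j - rN) * g1 j + y * CC j"
            using G1 j by auto
          have h2: "xi j 1 + g (j+1) * XM j = XN j * g j + a * AA j"
             "eta j 1 + g (j-1) * YM j = YN j * g j + a * BB j"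
             "zeta j 1 + g j * (of_int j - rM) = (of_int j - rN) * g j + a * CC j"
            using G j by auto
          show "(g1 (j+1) - g (j+1)) * XM j = XN j * (g1 j - g j) + (y - a) * AA j \<and>
               (g1 (j-1) - g (j-1)) * YM j = YN j * (g1 j - g j) + (y - a) * BB j \<and>
               (g1 j - g j) * (of_int j - rM) = (of_int j - rN) * (g1 j - g j) + (y - a) * CC j"
            using arg_cong2[OF h1(1) h2(1), of "(-)"] arg_cong2[OF h1(2) h2(2), of "(-)"]
              arg_cong2[OF h1(3) h2(3), of "(-)"] by (simp add: algebra_simps)
        qed
      qed
      then show ?thesis by simp
    qed
    show "\<exists>!a. ext_equiv ?M ?N c (cscale a (mkc AA BB CC))"
      using P U by blast
  qed
qed

lemma ecD:
  assumes "ext_cond SM XM YM rM SN XN YN rN A B C" "j \<in> SM"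
  shows "j+1 \<notin> SN \<Longrightarrow> A j = 0" "j-1 \<notin> SN \<Longrightarrow> B j = 0" "j \<notin> SN \<Longrightarrow> C j = 0"
    "(of_int j + 1 - rN) * A j + XM j * C (j+1) = XN j * C j + (of_int j - rM + 1) * A j"
    "(of_int j - 1 - rN) * B j + YM j * C (j-1) = YN j * C j + (of_int j - rM - 1) * B j"
    "YN (j+1) * A j + XM j * B (j+1) = (of_int j - rN) * C j + (of_int j - rM) * C j"
    "XN (j-1) * B j + YM j * A (j-1) = (of_int j - rN) * C j + (of_int j - rM - 1) * C j - C j"
  using assms unfolding ext_cond_def by blast+

lemma int_rec: "\<exists>g::int \<Rightarrow> 'k::ab_group_add. \<forall>j. g (j+1) = g j + h j"
proof -
  define g where "g j = (if 0 \<le> j then (\<Sum>i<nat j. h (int i)) else - (\<Sum>i<nat (-j). h (- int i - 1)))" for j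
  have "g (j+1) = g j + h j" for j
  proof (cases "0 \<le> j")
    case True
    then have "nat (j+1) = Suc (nat j)" by simp
    then show ?thesis using True unfolding g_def by simp
  next
    case False
    show ?thesis
    proof (cases "j = -1")
      case True
      then show ?thesis unfolding g_def by simp
    next
      case F2: False
      then have n: "nat (-j) = Suc (nat (-(j+1)))" using False by simp
      have "- int (nat (- (j + 1))) - 1 = j" using False by simp
      then show ?thesis using False F2 unfolding g_def n by simp
    qed
  qed
  then show ?thesis by blast
qed

definition MX :: "'k::field \<Rightarrow> int \<Rightarrow> 'k" where "MX la j = (if 0 \<le> j then 1 else (of_int j - la)^2)"
definition MY :: "'k::field \<Rightarrow> int \<Rightarrow> 'k" where "MY la j = (if j \<le> 0 then 1 else (of_int j - 1 - la)^2)"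

lemma Mmod_eq: "Mmod la = rmod UNIV (MX la) (MY la) la"
  by (simp add: Mmod_def rmod_def MX_def MY_def)

lemma notint_ne: "(la::'k::field_char_0) \<notin> \<int> \<Longrightarrow> of_int j - la \<noteq> 0"
  by (metis Ints_of_int eq_iff_diff_eq_0)

lemma MX_nz: "(la::'k::field_char_0) \<notin> \<int> \<Longrightarrow> MX la j \<noteq> 0"
  using notint_ne[of la j] unfolding MX_def by simp

lemma Mok: "rmod_ok UNIV (MX la) (MY la) la"
  unfolding rmod_ok_def MX_def MY_def by (auto simp: algebra_simps)

lemma M_one:
  assumes la: "(la::'k::field_char_0) \<notin> \<int>"
  shows "Ext1_one (rmod UNIV (MX la) (MY la) la) (rmod UNIV (MX la) (MY la) la)"
proof (rule one_crit[OF Mok Mok, where AA = "\<lambda>_. 0" and BB = "\<lambda>j. 2 * (of_int (j-1) - la) / MX la (j-1)"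
      and CC = "\<lambda>_. 1"])
  note nz = MX_nz[OF la]
  show "ext_cond UNIV (MX la) (MY la) la UNIV (MX la) (MY la) la (\<lambda>_. 0)
     (\<lambda>j. 2 * (of_int (j-1) - la) / MX la (j-1)) (\<lambda>_. 1)"
    unfolding ext_cond_def
  proof
    fix j :: int
    have x: "MX la j \<noteq> 0" "MX la (j-1) \<noteq> 0" using nz by auto
    show "(j + 1 \<notin> UNIV \<longrightarrow> 0 = 0) \<and>
         (j - 1 \<notin> UNIV \<longrightarrow> 2 * (of_int (j - 1) - la) / MX la (j - 1) = 0) \<and>
         (j \<notin> UNIV \<longrightarrow> 1 = 0) \<and>
         (of_int j + 1 - la) * 0 + MX la j * 1 = MX la j * 1 + (of_int j - la + 1) * 0 \<and>
         (of_int j - 1 - la) * (2 * (of_int (j - 1) - la) / MX la (j - 1)) + MY la j * 1 =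
         MY la j * 1 + (of_int j - la - 1) * (2 * (of_int (j - 1) - la) / MX la (j - 1)) \<and>
         MY la (j + 1) * 0 + MX la j * (2 * (of_int (j + 1 - 1) - la) / MX la (j + 1 - 1)) =
         (of_int j - la) * 1 + (of_int j - la) * 1 \<and>
         MX la (j - 1) * (2 * (of_int (j - 1) - la) / MX la (j - 1)) + MY la j * 0 =
         (of_int j - la) * 1 + (of_int j - la - 1) * 1 - 1"
      using x by (simp add: field_simps)
  qed
next
  fix xi eta zeta :: "int \<Rightarrow> 'k \<Rightarrow> 'k"
  assume E: "is_ext (rmod UNIV (MX la) (MY la) la) (rmod UNIV (MX la) (MY la) la) (xi, eta, zeta)"
  note ec = ext_fwd(4)[OF E]
  note nz = MX_nz[OF la]
  have step: "zeta (j+1) 1 = zeta j 1" for j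
  proof -
    have "(of_int j + 1 - la) * xi j 1 + MX la j * zeta (j+1) 1 = MX la j * zeta j 1 + (of_int j - la + 1) * xi j 1"
      using ecD(4)[OF ec, of j] by simp
    then have "MX la j * zeta (j+1) 1 = MX la j * zeta j 1" by (simp add: algebra_simps)
    then show ?thesis using nz[of j] by simp
  qed
  have const: "zeta j 1 = zeta 0 1" for j
  proof (induction j rule: int_induct[where k=0])
    case base then show ?case by simp
  next
    case (step1 i) then show ?case using step[of i] by simp
  next
    case (step2 i) then show ?case using step[of "i-1"] by simp
  qed
  obtain g where g: "\<forall>j. g (j+1) = g j + (- xi j 1 / MX la j)" using int_rec[of "\<lambda>j. - xi j 1 / MX la j"] by blast
  show "\<exists>a g. (\<forall>j. j \<notin> UNIV \<longrightarrow> g j = 0) \<and>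
          (\<forall>j\<in>UNIV. xi j 1 + g (j + 1) * MX la j = MX la j * g j + a * 0 \<and>
                eta j 1 + g (j - 1) * MY la j = MY la j * g j + a * (2 * (of_int (j - 1) - la) / MX la (j - 1)) \<and>
                zeta j 1 + g j * (of_int j - la) = (of_int j - la) * g j + a * 1)"
  proof (intro exI conjI allI ballI impI)
    fix j :: int
    show "xi j 1 + g (j + 1) * MX la j = MX la j * g j + zeta 0 1 * 0"
      using g[rule_format, of j] nz[of j] by (simp add: field_simps)
    have gj: "g j = g (j-1) + (- xi (j-1) 1 / MX la (j-1))" using g[rule_format, of "j-1"] by simp
    have r3: "MY la j * xi (j-1) 1 + MX la (j-1) * eta j 1 = (of_int (j-1) - la) * zeta (j-1) 1 + (of_int (j-1) - la) * zeta (j-1) 1"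
      using ecD(6)[OF ec, of "j-1"] by simp
    show "eta j 1 + g (j - 1) * MY la j = MY la j * g j + zeta 0 1 * (2 * (of_int (j - 1) - la) / MX la (j - 1))"
    proof -
      have gj': "g (j-1) = g j + xi (j-1) 1 / MX la (j-1)" using gj by simp
      show ?thesis unfolding gj' using r3 nz[of "j-1"] const[of "j-1"] by (simp add: field_simps)
    qed
    show "zeta j 1 + g j * (of_int j - la) = (of_int j - la) * g j + zeta 0 1 * 1"
      using const[of j] by simp
  qed simp
next
  fix b and g :: "int \<Rightarrow> 'k"
  assume "\<forall>j\<in>UNIV. g (j + 1) * MX la j = MX la j * g j + b * 0 \<and>
           g (j - 1) * MY la j = MY la j * g j + b * (2 * (of_int (j - 1) - la) / MX la (j - 1)) \<and>
           g j * (of_int j - la) = (of_int j - la) * g j + b * 1"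
  then show "b = 0" by (auto simp: algebra_simps)
qed

definition SX :: "int set" where "SX = {j. j \<le> 0}"
definition XXf :: "int \<Rightarrow> 'k::field" where "XXf j = (if j < 0 then of_int (j^2) else 0)"
definition XYf :: "int \<Rightarrow> 'k::field" where "XYf j = (if j \<le> 0 then 1 else 0)"
definition SY :: "int set" where "SY = {j. 1 \<le> j}"
definition YXf :: "int \<Rightarrow> 'k::field" where "YXf j = (if 1 \<le> j then 1 else 0)"
definition YYf :: "int \<Rightarrow> 'k::field" where "YYf j = (if 1 \<le> j then of_int ((j-1)^2) else 0)"

lemma Xmod_eq: "Xmod = rmod SX XXf XYf 0"
  by (simp add: Xmod_def rmod_def SX_def XXf_def XYf_def fun_eq_iff)

lemma Ymod_eq: "Ymod = rmod SY YXf YYf 0"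
  by (simp add: Ymod_def rmod_def SY_def YXf_def YYf_def fun_eq_iff)

lemma Xok: "rmod_ok SX (XXf::int \<Rightarrow> 'k::field) XYf 0"
  unfolding rmod_ok_def SX_def XXf_def XYf_def by (auto simp: algebra_simps power2_eq_square)

lemma Yok: "rmod_ok SY (YXf::int \<Rightarrow> 'k::field) YYf 0"
  unfolding rmod_ok_def
proof
  fix j :: int assume "j \<in> SY"
  then show "(j + 1 \<notin> SY \<longrightarrow> YXf j = 0) \<and>
         (j - 1 \<notin> SY \<longrightarrow> (YYf j :: 'k) = 0) \<and>
         YYf (j + 1) * YXf j = (of_int j - 0 :: 'k)\<^sup>2 \<and> YXf (j - 1) * YYf j = (of_int j - 0 - 1 :: 'k)\<^sup>2"
    by (cases "j = 1") (auto simp: SY_def YXf_def YYf_def algebra_simps power2_eq_square)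
qed

lemma X_one: "Ext1_one (rmod SX (XXf::int \<Rightarrow> 'k::field_char_0) XYf 0) (rmod SX XXf XYf 0)"
proof (rule one_crit[OF Xok Xok, where AA = "\<lambda>j. if j < 0 then 2 * of_int j else 0" and BB = "\<lambda>_. 0"
      and CC = "\<lambda>_. 1"])
  show "ext_cond SX XXf XYf 0 SX XXf XYf 0 (\<lambda>j. if j < 0 then 2 * of_int j else (0::'k)) (\<lambda>_. 0) (\<lambda>_. 1)"
    unfolding ext_cond_def
  proof
    fix j :: int assume j: "j \<in> SX"
    show "(j + 1 \<notin> SX \<longrightarrow> (if j < 0 then 2 * of_int j else 0) = (0::'k)) \<and>
        (j - 1 \<notin> SX \<longrightarrow> (0::'k) = 0) \<and> (j \<notin> SX \<longrightarrow> (1::'k) = 0) \<and>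
        (of_int j + 1 - 0) * (if j < 0 then 2 * of_int j else 0) + XXf j * 1 =
        XXf j * 1 + (of_int j - 0 + 1) * (if j < 0 then 2 * of_int j else 0) \<and>
        (of_int j - 1 - 0) * 0 + XYf j * 1 = XYf j * 1 + (of_int j - 0 - 1) * 0 \<and>
        XYf (j + 1) * (if j < 0 then 2 * of_int j else 0) + XXf j * 0 =
        (of_int j - 0) * 1 + (of_int j - 0) * 1 \<and>
        XXf (j - 1) * 0 + XYf j * (if j - 1 < 0 then 2 * of_int (j - 1) else 0) =
        (of_int j - 0) * 1 + (of_int j - 0 - 1) * 1 - 1"
      using j by (cases "j < 0") (auto simp: SX_def XXf_def XYf_def algebra_simps)
  qed
next
  fix xi eta zeta :: "int \<Rightarrow> 'k \<Rightarrow> 'k"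
  assume E: "is_ext (rmod SX XXf XYf 0) (rmod SX XXf XYf 0) (xi, eta, zeta)"
  note ec = ext_fwd(4)[OF E]
  have step: "zeta (j-1) 1 = zeta j 1" if "j \<le> 0" for j
  proof -
    have "(of_int j - 1 - 0) * eta j 1 + XYf j * zeta (j-1) 1 = XYf j * zeta j 1 + (of_int j - 0 - 1) * eta j 1"
      using ecD(5)[OF ec, of j] that by (simp add: SX_def)
    then show ?thesis using that by (simp add: XYf_def)
  qed
  have cn: "zeta (- int n) 1 = zeta 0 1" for n
  proof (induction n)
    case (Suc n)
    have st: "zeta (- int n - 1) 1 = zeta (- int n) 1" using step[of "- int n"] by simp
    have e: "- int (Suc n) = - int n - 1" by simp
    show ?case unfolding e using st Suc.IH by (rule trans)
  qed simp
  have const: "zeta j 1 = zeta 0 1" if "j \<le> 0" for j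
    using cn[of "nat (-j)"] that by simp
  obtain g0 where g0: "\<forall>j. g0 (j+1) = g0 j + eta (j+1) 1" using int_rec[of "\<lambda>j. eta (j+1) 1"] by blast
  define g where "g j = (if j \<le> 0 then g0 j else 0)" for j
  show "\<exists>a g. (\<forall>j. j \<notin> SX \<longrightarrow> g j = 0) \<and>
          (\<forall>j\<in>SX. xi j 1 + g (j + 1) * XXf j = XXf j * g j + a * (if j < 0 then 2 * of_int j else 0) \<and>
                eta j 1 + g (j - 1) * XYf j = XYf j * g j + a * 0 \<and>
                zeta j 1 + g j * (of_int j - 0) = (of_int j - 0) * g j + a * 1)"
  proof (intro exI conjI allI ballI impI)
    fix j :: int assume "j \<notin> SX" then show "g j = 0" unfolding g_def SX_def by simp
  next
    fix j :: int assume j: "j \<in> SX"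
    then have j0: "j \<le> 0" by (simp add: SX_def)
    show "xi j 1 + g (j + 1) * XXf j = XXf j * g j + zeta 0 1 * (if j < 0 then 2 * of_int j else 0)"
    proof (cases "j < 0")
      case True
      have r3: "XYf (j+1) * xi j 1 + XXf j * eta (j+1) 1 = (of_int j - 0) * zeta j 1 + (of_int j - 0) * zeta j 1"
        using ecD(6)[OF ec j] .
      have gg: "g (j+1) = g j + eta (j+1) 1" using g0 True j0 unfolding g_def by simp
      show ?thesis unfolding gg using r3 True const[OF j0] by (simp add: XXf_def XYf_def algebra_simps)
    next
      case False
      then have "j = 0" using j0 by simp
      moreover have "xi 0 1 = 0" using ecD(1)[OF ec, of 0] by (simp add: SX_def)
      ultimately show ?thesis by (simp add: XXf_def)
    qed
    show "eta j 1 + g (j - 1) * XYf j = XYf j * g j + zeta 0 1 * 0"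
      using g0[rule_format, of "j-1"] j0 unfolding g_def XYf_def by simp
    show "zeta j 1 + g j * (of_int j - 0) = (of_int j - 0) * g j + zeta 0 1 * 1"
      using const[OF j0] by simp
  qed
next
  fix b and g :: "int \<Rightarrow> 'k"
  assume "\<forall>j\<in>SX. g (j + 1) * XXf j = XXf j * g j + b * (if j < 0 then 2 * of_int j else 0) \<and>
           g (j - 1) * XYf j = XYf j * g j + b * 0 \<and>
           g j * (of_int j - 0) = (of_int j - 0) * g j + b * 1"
  then have "g 0 * (of_int 0 - 0) = (of_int 0 - 0) * g 0 + b * 1" by (auto simp: SX_def)
  then show "b = 0" by simp
qed

lemma Y_one: "Ext1_one (rmod SY (YXf::int \<Rightarrow> 'k::field_char_0) YYf 0) (rmod SY YXf YYf 0)"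
proof (rule one_crit[OF Yok Yok, where AA = "\<lambda>_. 0" and BB = "\<lambda>j. 2 * (of_int j - 1)"
      and CC = "\<lambda>_. 1"])
  show "ext_cond SY YXf YYf 0 SY YXf YYf 0 (\<lambda>_. 0) (\<lambda>j. 2 * (of_int j - 1)) (\<lambda>_. (1::'k))"
    unfolding ext_cond_def
  proof
    fix j :: int assume j: "j \<in> SY"
    show "(j + 1 \<notin> SY \<longrightarrow> (0::'k) = 0) \<and>
        (j - 1 \<notin> SY \<longrightarrow> 2 * (of_int j - 1) = (0::'k)) \<and> (j \<notin> SY \<longrightarrow> (1::'k) = 0) \<and>
        (of_int j + 1 - 0) * 0 + YXf j * 1 = YXf j * 1 + (of_int j - 0 + 1) * (0::'k) \<and>
        (of_int j - 1 - 0) * (2 * (of_int j - 1)) + YYf j * 1 = YYf j * 1 + (of_int j - 0 - 1) * (2 * (of_int j - (1::'k))) \<and>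
        YYf (j + 1) * 0 + YXf j * (2 * (of_int (j + 1) - 1)) = (of_int j - 0) * 1 + (of_int j - 0) * (1::'k) \<and>
        YXf (j - 1) * (2 * (of_int j - 1)) + YYf j * 0 = (of_int j - 0) * 1 + (of_int j - 0 - 1) * 1 - (1::'k)"
      using j by (cases "j = 1") (auto simp: SY_def YXf_def YYf_def algebra_simps)
  qed
next
  fix xi eta zeta :: "int \<Rightarrow> 'k \<Rightarrow> 'k"
  assume E: "is_ext (rmod SY YXf YYf 0) (rmod SY YXf YYf 0) (xi, eta, zeta)"
  note ec = ext_fwd(4)[OF E]
  have step: "zeta (j+1) 1 = zeta j 1" if "1 \<le> j" for j
  proof -
    have "(of_int j + 1 - 0) * xi j 1 + YXf j * zeta (j+1) 1 = YXf j * zeta j 1 + (of_int j - 0 + 1) * xi j 1"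
      using ecD(4)[OF ec, of j] that by (simp add: SY_def)
    then show ?thesis using that by (simp add: YXf_def)
  qed
  have cn: "zeta (1 + int n) 1 = zeta 1 1" for n
  proof (induction n)
    case (Suc n)
    have st: "zeta (1 + int n + 1) 1 = zeta (1 + int n) 1" using step[of "1 + int n"] by simp
    have e: "1 + int (Suc n) = 1 + int n + 1" by simp
    show ?case unfolding e using st Suc.IH by (rule trans)
  qed simp
  have const: "zeta j 1 = zeta 1 1" if "1 \<le> j" for j
    using cn[of "nat (j - 1)"] that by simp
  obtain g0 where g0: "\<forall>j. g0 (j+1) = g0 j + - xi j 1" using int_rec[of "\<lambda>j. - xi j 1"] by blast
  define g where "g j = (if 1 \<le> j then g0 j else 0)" for j
  show "\<exists>a g. (\<forall>j. j \<notin> SY \<longrightarrow> g j = 0) \<and>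
          (\<forall>j\<in>SY. xi j 1 + g (j + 1) * YXf j = YXf j * g j + a * 0 \<and>
                eta j 1 + g (j - 1) * YYf j = YYf j * g j + a * (2 * (of_int j - 1)) \<and>
                zeta j 1 + g j * (of_int j - 0) = (of_int j - 0) * g j + a * 1)"
  proof (intro exI conjI allI ballI impI)
    fix j :: int assume "j \<notin> SY" then show "g j = 0" unfolding g_def SY_def by simp
  next
    fix j :: int assume j: "j \<in> SY"
    then have j1: "1 \<le> j" by (simp add: SY_def)
    show "xi j 1 + g (j + 1) * YXf j = YXf j * g j + zeta 1 1 * 0"
      using g0[rule_format, of j] j1 unfolding g_def YXf_def by simp
    show "eta j 1 + g (j - 1) * YYf j = YYf j * g j + zeta 1 1 * (2 * (of_int j - 1))"
    proof (cases "j = 1")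
      case False
      then have j2: "j - 1 \<in> SY" "1 \<le> j - 1" using j1 by (auto simp: SY_def)
      have r3: "YYf (j - 1 + 1) * xi (j-1) 1 + YXf (j-1) * eta (j - 1 + 1) 1 = (of_int (j-1) - 0) * zeta (j-1) 1 + (of_int (j-1) - 0) * zeta (j-1) 1"
        using ecD(6)[OF ec j2(1)] .
      have gg: "g j = g (j-1) - xi (j-1) 1" using g0[rule_format, of "j-1"] j2 j1 unfolding g_def by simp
      show ?thesis unfolding gg using r3 j2 const[OF j2(2)] by (simp add: YXf_def YYf_def algebra_simps)
    next
      case True
      moreover have "eta 1 1 = 0" using ecD(2)[OF ec, of 1] by (simp add: SY_def)
      ultimately show ?thesis by (simp add: YYf_def)
    qed
    show "zeta j 1 + g j * (of_int j - 0) = (of_int j - 0) * g j + zeta 1 1 * 1"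
      using const[OF j1] by simp
  qed
next
  fix b and g :: "int \<Rightarrow> 'k"
  assume "\<forall>j\<in>SY. g (j + 1) * YXf j = YXf j * g j + b * 0 \<and>
           g (j - 1) * YYf j = YYf j * g j + b * (2 * (of_int j - 1)) \<and>
           g j * (of_int j - 0) = (of_int j - 0) * g j + b * 1"
  then have "g 1 * (of_int 1 - 0) = (of_int 1 - 0) * g 1 + b * 1" by (auto simp: SY_def)
  then show "b = 0" by simp
qed

lemma XY_one: "Ext1_one (rmod SX (XXf::int \<Rightarrow> 'k::field_char_0) XYf 0) (rmod SY YXf YYf 0)"
proof (rule one_crit[OF Xok Yok, where AA = "\<lambda>j. if j = 0 then 1 else 0" and BB = "\<lambda>_. 0"
      and CC = "\<lambda>_. 0"])
  show "ext_cond SX XXf XYf 0 SY YXf YYf 0 (\<lambda>j. if j = 0 then 1 else (0::'k)) (\<lambda>_. 0) (\<lambda>_. 0)"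
    unfolding ext_cond_def
  proof
    fix j :: int assume j: "j \<in> SX"
    show "(j + 1 \<notin> SY \<longrightarrow> (if j = 0 then 1 else 0) = (0::'k)) \<and>
        (j - 1 \<notin> SY \<longrightarrow> (0::'k) = 0) \<and> (j \<notin> SY \<longrightarrow> (0::'k) = 0) \<and>
        (of_int j + 1 - 0) * (if j = 0 then 1 else 0) + XXf j * 0 = YXf j * 0 + (of_int j - 0 + 1) * (if j = 0 then 1 else (0::'k)) \<and>
        (of_int j - 1 - 0) * 0 + XYf j * 0 = YYf j * 0 + (of_int j - 0 - 1) * (0::'k) \<and>
        YYf (j + 1) * (if j = 0 then 1 else 0) + XXf j * 0 = (of_int j - 0) * 0 + (of_int j - 0) * (0::'k) \<and>
        YXf (j - 1) * 0 + XYf j * (if j - 1 = 0 then 1 else 0) = (of_int j - 0) * 0 + (of_int j - 0 - 1) * 0 - (0::'k)"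
      using j by (auto simp: SX_def SY_def YYf_def)
  qed
next
  fix xi eta zeta :: "int \<Rightarrow> 'k \<Rightarrow> 'k"
  assume E: "is_ext (rmod SX XXf XYf 0) (rmod SY YXf YYf 0) (xi, eta, zeta)"
  note ec = ext_fwd(4)[OF E]
  show "\<exists>a g. (\<forall>j. j \<notin> SY \<longrightarrow> g j = 0) \<and>
          (\<forall>j\<in>SX. xi j 1 + g (j + 1) * XXf j = YXf j * g j + a * (if j = 0 then 1 else 0) \<and>
                eta j 1 + g (j - 1) * XYf j = YYf j * g j + a * 0 \<and>
                zeta j 1 + g j * (of_int j - 0) = (of_int j - 0) * g j + a * 0)"
  proof (intro exI[of _ "xi 0 1"] exI[of _ "\<lambda>_. 0"] conjI allI ballI impI)
    fix j :: int assume j: "j \<in> SX"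
    then have j0: "j \<le> 0" by (simp add: SX_def)
    show "xi j 1 + 0 * XXf j = YXf j * 0 + xi 0 1 * (if j = 0 then 1 else 0)"
      using ecD(1)[OF ec j] j0 by (cases "j = 0") (auto simp: SY_def)
    show "eta j 1 + 0 * XYf j = YYf j * 0 + xi 0 1 * 0"
      using ecD(2)[OF ec j] j0 by (auto simp: SY_def)
    show "zeta j 1 + 0 * (of_int j - 0) = (of_int j - 0) * 0 + xi 0 1 * 0"
      using ecD(3)[OF ec j] j0 by (auto simp: SY_def)
  qed simp
next
  fix b and g :: "int \<Rightarrow> 'k"
  assume "\<forall>j\<in>SX. g (j + 1) * XXf j = YXf j * g j + b * (if j = 0 then 1 else 0) \<and>
           g (j - 1) * XYf j = YYf j * g j + b * 0 \<and>
           g j * (of_int j - 0) = (of_int j - 0) * g j + b * 0"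
  then have "g (0 + 1) * XXf 0 = YXf 0 * g 0 + b * (if (0::int) = 0 then 1 else 0)" by (auto simp: SX_def)
  then show "b = 0" by (simp add: XXf_def YXf_def)
qed

lemma YX_one: "Ext1_one (rmod SY (YXf::int \<Rightarrow> 'k::field_char_0) YYf 0) (rmod SX XXf XYf 0)"
proof (rule one_crit[OF Yok Xok, where AA = "\<lambda>_. 0" and BB = "\<lambda>j. if j = 1 then 1 else 0"
      and CC = "\<lambda>_. 0"])
  show "ext_cond SY YXf YYf 0 SX XXf XYf 0 (\<lambda>_. 0) (\<lambda>j. if j = 1 then 1 else (0::'k)) (\<lambda>_. 0)"
    unfolding ext_cond_def
  proof
    fix j :: int assume j: "j \<in> SY"
    show "(j + 1 \<notin> SX \<longrightarrow> (0::'k) = 0) \<and>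
        (j - 1 \<notin> SX \<longrightarrow> (if j = 1 then 1 else 0) = (0::'k)) \<and> (j \<notin> SX \<longrightarrow> (0::'k) = 0) \<and>
        (of_int j + 1 - 0) * 0 + YXf j * 0 = XXf j * 0 + (of_int j - 0 + 1) * (0::'k) \<and>
        (of_int j - 1 - 0) * (if j = 1 then 1 else 0) + YYf j * 0 = XYf j * 0 + (of_int j - 0 - 1) * (if j = 1 then 1 else (0::'k)) \<and>
        XYf (j + 1) * 0 + YXf j * (if j + 1 = 1 then 1 else 0) = (of_int j - 0) * 0 + (of_int j - 0) * (0::'k) \<and>
        XXf (j - 1) * (if j = 1 then 1 else 0) + YYf j * 0 = (of_int j - 0) * 0 + (of_int j - 0 - 1) * 0 - (0::'k)"
      using j by (auto simp: SX_def SY_def XXf_def)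
  qed
next
  fix xi eta zeta :: "int \<Rightarrow> 'k \<Rightarrow> 'k"
  assume E: "is_ext (rmod SY YXf YYf 0) (rmod SX XXf XYf 0) (xi, eta, zeta)"
  note ec = ext_fwd(4)[OF E]
  show "\<exists>a g. (\<forall>j. j \<notin> SX \<longrightarrow> g j = 0) \<and>
          (\<forall>j\<in>SY. xi j 1 + g (j + 1) * YXf j = XXf j * g j + a * 0 \<and>
                eta j 1 + g (j - 1) * YYf j = XYf j * g j + a * (if j = 1 then 1 else 0) \<and>
                zeta j 1 + g j * (of_int j - 0) = (of_int j - 0) * g j + a * 0)"
  proof (intro exI[of _ "eta 1 1"] exI[of _ "\<lambda>_. 0"] conjI allI ballI impI)
    fix j :: int assume j: "j \<in> SY"
    then have j1: "1 \<le> j" by (simp add: SY_def)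
    show "xi j 1 + 0 * YXf j = XXf j * 0 + eta 1 1 * 0"
      using ecD(1)[OF ec j] j1 by (auto simp: SX_def)
    show "eta j 1 + 0 * YYf j = XYf j * 0 + eta 1 1 * (if j = 1 then 1 else 0)"
      using ecD(2)[OF ec j] j1 by (cases "j = 1") (auto simp: SX_def)
    show "zeta j 1 + 0 * (of_int j - 0) = (of_int j - 0) * 0 + eta 1 1 * 0"
      using ecD(3)[OF ec j] j1 by (auto simp: SX_def)
  qed simp
next
  fix b and g :: "int \<Rightarrow> 'k"
  assume "\<forall>j\<in>SY. g (j + 1) * YXf j = XXf j * g j + b * 0 \<and>
           g (j - 1) * YYf j = XYf j * g j + b * (if j = 1 then 1 else 0) \<and>
           g j * (of_int j - 0) = (of_int j - 0) * g j + b * 0"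
  then have "g (1 - 1) * YYf 1 = XYf 1 * g 1 + b * (if (1::int) = 1 then 1 else 0)" by (auto simp: SY_def)
  then show "b = 0" by (simp add: YYf_def XYf_def)
qed

lemma notint_ne2: "(la::'k::field_char_0) \<notin> \<int> \<Longrightarrow> la \<noteq> of_int d"
  by auto

lemma notint_ne3: "(la::'k::field_char_0) \<notin> \<int> \<Longrightarrow> (0::'k) \<noteq> la + of_int d"
proof
  assume "la \<notin> \<int>" "0 = la + of_int d"
  then have "la = of_int (- d)" by (simp add: eq_neg_iff_add_eq_0)
  then show False using \<open>la \<notin> \<int>\<close> by auto
qed

theorem lemma3p7:
  fixes dummy :: "'k::field_char_0"
  assumes alg_closed: "\<forall>p::'k poly. degree p > 0 \<longrightarrow> (\<exists>t. poly p t = 0)"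
  shows "gExt1_k_deg0 (Xmod::'k gmod) Ymod \<and> gExt1_k_deg0 (Ymod::'k gmod) Xmod
       \<and> gExt1_k_deg0 (Xmod::'k gmod) Xmod \<and> gExt1_k_deg0 (Ymod::'k gmod) Ymod
       \<and> (\<forall>la mu::'k. la \<notin> \<int> \<longrightarrow> mu \<notin> \<int> \<longrightarrow> la \<noteq> mu \<longrightarrow> Ext1_zero (Mmod la) (Mmod mu))
       \<and> (\<forall>la::'k. la \<notin> \<int> \<longrightarrow> Ext1_one (Mmod la) (Mmod la))
       \<and> (\<forall>la::'k. la \<notin> \<int> \<longrightarrow> (\<forall>S\<in>{Xmod, Ymod}.
              gExt1_zero (Mmod la) S \<and> gExt1_zero S (Mmod la)))"
proof -
  have dz: "(0::'k) \<noteq> 0 + of_int d" if "d \<noteq> 0" for d :: int using that by simp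
  have g1: "gExt1_k_deg0 (Xmod::'k gmod) Ymod"
    unfolding gExt1_k_deg0_def Xmod_eq Ymod_eq shift0 shift_rmod
    using XY_one delta_zero[OF dz] by blast
  have g2: "gExt1_k_deg0 (Ymod::'k gmod) Xmod"
    unfolding gExt1_k_deg0_def Xmod_eq Ymod_eq shift0 shift_rmod
    using YX_one delta_zero[OF dz] by blast
  have g3: "gExt1_k_deg0 (Xmod::'k gmod) Xmod"
    unfolding gExt1_k_deg0_def Xmod_eq shift0 shift_rmod
    using X_one delta_zero[OF dz] by blast
  have g4: "gExt1_k_deg0 (Ymod::'k gmod) Ymod"
    unfolding gExt1_k_deg0_def Ymod_eq shift0 shift_rmod
    using Y_one delta_zero[OF dz] by blast
  have m1: "\<forall>la mu::'k. la \<notin> \<int> \<longrightarrow> mu \<notin> \<int> \<longrightarrow> la \<noteq> mu \<longrightarrow> Ext1_zero (Mmod la) (Mmod mu)"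
    unfolding Mmod_eq using delta_zero by blast
  have m2: "\<forall>la::'k. la \<notin> \<int> \<longrightarrow> Ext1_one (Mmod la) (Mmod la)"
    unfolding Mmod_eq using M_one by blast
  have m3: "\<forall>la::'k. la \<notin> \<int> \<longrightarrow> (\<forall>S\<in>{Xmod, Ymod}.
              gExt1_zero (Mmod la) S \<and> gExt1_zero S (Mmod la))"
  proof (intro allI impI ballI)
    fix la :: 'k and S :: "'k gmod" assume la: "la \<notin> \<int>" and S: "S \<in> {Xmod, Ymod}"
    have a: "gExt1_zero (Mmod la) S"
      using S unfolding gExt1_zero_def Mmod_eq Xmod_eq Ymod_eq shift_rmod
      using la by (auto simp: shift_rmod intro!: delta_zero)
    have b: "gExt1_zero S (Mmod la)"
      using S unfolding gExt1_zero_def Mmod_eq Xmod_eq Ymod_eq shift_rmod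
      using la by (auto simp: shift_rmod notint_ne3[OF la] intro!: delta_zero)
    show "gExt1_zero (Mmod la) S \<and> gExt1_zero S (Mmod la)" using a b by blast
  qed
  show ?thesis using g1 g2 g3 g4 m1 m2 m3 by blast
qed

end
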